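(* Let $V\in(\mathbb{R}\cup\{-\infty\})^{n\times p}$ have no row and no column identically equal to $-\infty$. If a Hilbert ball $B(a,r)$ with $a\in\mathbb{R}^n$ and radius $r>0$ is included in $\operatorname{Col}(V)$, then it is also included in a simplicial tropical cone generated by some $n$ columns of $V$.
   Context: $\mathbb{R}_{\max}=\mathbb{R}\cup\{-\infty\}$. A tropical cone is a subset $\mathcal{C}\subset\mathbb{R}_{\max}^n$ such that $x,y\in\mathcal C$, $\lambda\in\mathbb{R}_{\max}$ imply $\lambda+x\in\mathcal C$ and $x\vee y=(\max(x_i,y_i))_i\in\mathcal C$. $\operatorname{Col}(V)$ is the tropical cone generated by the columns of $V$, i.e. $\{Vx:x\in\mathbb{R}_{\max}^p\}$ with $(Vx)_i=\max_k(V_{ik}+x_k)$. Hilbert's projective metric: $d(x,y)=\inf\{\lambda-\mu:\lambda,\mu\in\mathbb{R},\ \mu+y_i\le x_i\le\lambda+y_i\ \forall i\}$; $B(a,r)=\{x\in\mathbb{R}_{\max}^n:d(a,x)\le r\}$. A vector $u$ of a tropical cone $\mathcal C$ is extreme if $u=v\vee w$ with $v,w\in\mathcal C$ implies $u=v$ or $u=w$; an extreme direction is a set $\{\lambda+u:\lambda\in\mathbb{R}_{\max}\}$ with $u$ extreme. A tropical cone in $\mathbb{R}_{\max}^n$ is simplicial if it has precisely $n$ extreme directions. *)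

theory Defs
  imports "HOL-Library.Extended_Real"
begin

text \<open>R_max is modelled as the extended reals without +infinity; the bottom
element is MInfty. Vectors of R_max^n are functions from a finite index type.\<close>

definition rmax_vec :: "('n \<Rightarrow> ereal) \<Rightarrow> bool" where
  "rmax_vec x \<longleftrightarrow> (\<forall>i. x i \<noteq> \<infinity>)"

definition rmax_vecs :: "('n \<Rightarrow> ereal) set" where
  "rmax_vecs = {x. rmax_vec x}"

definition tropical_cone :: "('n \<Rightarrow> ereal) set \<Rightarrow> bool" where
  "tropical_cone C \<longleftrightarrow> C \<subseteq> rmax_vecs \<and>
     (\<forall>x\<in>C. \<forall>l::ereal. l \<noteq> \<infinity> \<longrightarrow> (\<lambda>i. l + x i) \<in> C) \<and>
     (\<forall>x\<in>C. \<forall>y\<in>C. (\<lambda>i. max (x i) (y i)) \<in> C)"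

definition col_sub :: "('n \<Rightarrow> 'p \<Rightarrow> ereal) \<Rightarrow> 'p set \<Rightarrow> ('n \<Rightarrow> ereal) set" where
  "col_sub V S = {y. \<exists>c::'p \<Rightarrow> ereal. rmax_vec c \<and> y = (\<lambda>i. SUP k\<in>S. V i k + c k)}"

definition Col :: "('n \<Rightarrow> 'p \<Rightarrow> ereal) \<Rightarrow> ('n \<Rightarrow> ereal) set" where
  "Col V = col_sub V UNIV"

definition hilbert_dist :: "('n \<Rightarrow> ereal) \<Rightarrow> ('n \<Rightarrow> ereal) \<Rightarrow> ereal" where
  "hilbert_dist x y = Inf {ereal (l - m) | l m :: real.
      \<forall>i. ereal m + y i \<le> x i \<and> x i \<le> ereal l + y i}"

definition hilbert_ball :: "('n \<Rightarrow> ereal) \<Rightarrow> real \<Rightarrow> ('n \<Rightarrow> ereal) set" where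
  "hilbert_ball a r = {x \<in> rmax_vecs. hilbert_dist a x \<le> ereal r}"

definition extreme_vec :: "('n \<Rightarrow> ereal) set \<Rightarrow> ('n \<Rightarrow> ereal) \<Rightarrow> bool" where
  "extreme_vec C u \<longleftrightarrow> u \<in> C \<and>
     (\<forall>v\<in>C. \<forall>w\<in>C. u = (\<lambda>i. max (v i) (w i)) \<longrightarrow> u = v \<or> u = w)"

definition extreme_directions :: "('n \<Rightarrow> ereal) set \<Rightarrow> ('n \<Rightarrow> ereal) set set" where
  "extreme_directions C = {D. \<exists>u. extreme_vec C u \<and> u \<noteq> (\<lambda>i. -\<infinity>) \<and>
      D = {(\<lambda>i. l + u i) | l::ereal. l \<noteq> \<infinity>}}"

definition simplicial :: "('n::finite \<Rightarrow> ereal) set \<Rightarrow> bool" where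
  "simplicial C \<longleftrightarrow> tropical_cone C \<and> finite (extreme_directions C) \<and>
     card (extreme_directions C) = card (UNIV :: 'n set)"

end

theory Submission
  imports Defs
begin

lemma SUP_att: fixes f :: "'a::finite \<Rightarrow> ereal" shows "\<exists>j. (SUP j. f j) = f j"
proof -
  have "Sup (range f) \<in> range f"
    by (rule finite_Sup_in) (auto simp: sup_max max_def)
  then show ?thesis by auto
qed

lemma max_plus_ereal: "max (a::ereal) b + z = max (a + z) (b + z)"
  by (auto simp: max_def add_right_mono intro: antisym)

lemma add_SUP_fin: fixes f :: "'a::finite \<Rightarrow> ereal" shows "l + (SUP j. f j) = (SUP j. l + f j)"
proof -
  obtain j0 where j0: "(SUP j. f j) = f j0" using SUP_att by blast
  show ?thesis
  proof (rule order.antisym)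
    show "l + (SUP j. f j) \<le> (SUP j. l + f j)" unfolding j0 by (rule SUP_upper) simp
    show "(SUP j. l + f j) \<le> l + (SUP j. f j)"
      by (rule SUP_least) (simp add: add_left_mono SUP_upper)
  qed
qed

lemma max_SUP_fin: "max (SUP j. f j) (SUP j. g j) = (SUP j. max (f j) (g j :: ereal))"
  using SUP_sup_distrib[where A=UNIV and f=f and g=g] by (simp add: sup_max)

definition gen :: "('n::finite \<Rightarrow> 'n \<Rightarrow> ereal) \<Rightarrow> ('n \<Rightarrow> ereal) set" where
  "gen U = {x. \<exists>\<mu>. (\<forall>j. \<mu> j \<noteq> \<infinity>) \<and> x = (\<lambda>i. SUP j. \<mu> j + U j i)}"

definition ray :: "('n \<Rightarrow> ereal) \<Rightarrow> ('n \<Rightarrow> ereal) set" where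
  "ray u = {(\<lambda>i. l + u i) | l::ereal. l \<noteq> \<infinity>}"

lemma gen_cone:
  assumes U: "\<forall>j i. U j i \<noteq> \<infinity>"
  shows "tropical_cone (gen U)"
  unfolding tropical_cone_def
proof (intro conjI ballI allI impI)
  show "gen U \<subseteq> rmax_vecs"
  proof
    fix x assume "x \<in> gen U"
    then obtain \<mu> where mu: "\<forall>j. \<mu> j \<noteq> \<infinity>" and x: "x = (\<lambda>i. SUP j. \<mu> j + U j i)"
      unfolding gen_def by blast
    have "x i \<noteq> \<infinity>" for i
    proof -
      obtain j where "x i = \<mu> j + U j i" using SUP_att[of "\<lambda>j. \<mu> j + U j i"] x by auto
      then show ?thesis using mu U by simp
    qed
    then show "x \<in> rmax_vecs" by (simp add: rmax_vecs_def rmax_vec_def)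
  qed
next
  fix x and l :: ereal assume "x \<in> gen U" "l \<noteq> \<infinity>"
  then obtain \<mu> where mu: "\<forall>j. \<mu> j \<noteq> \<infinity>" and x: "x = (\<lambda>i. SUP j. \<mu> j + U j i)"
    unfolding gen_def by blast
  have "(\<lambda>i. l + x i) = (\<lambda>i. SUP j. (l + \<mu> j) + U j i)"
    unfolding x add_SUP_fin by (simp add: add.assoc)
  moreover have "\<forall>j. l + \<mu> j \<noteq> \<infinity>" using mu \<open>l \<noteq> \<infinity>\<close> by simp
  ultimately show "(\<lambda>i. l + x i) \<in> gen U" unfolding gen_def
    by (intro CollectI exI[of _ "\<lambda>j. l + \<mu> j"]) simp
next
  fix x y assume "x \<in> gen U" "y \<in> gen U"
  then obtain \<mu> \<nu> where mu: "\<forall>j. \<mu> j \<noteq> \<infinity>" and x: "x = (\<lambda>i. SUP j. \<mu> j + U j i)"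
     and nu: "\<forall>j. \<nu> j \<noteq> \<infinity>" and y: "y = (\<lambda>i. SUP j. \<nu> j + U j i)"
    unfolding gen_def by blast
  have "(\<lambda>i. max (x i) (y i)) = (\<lambda>i. SUP j. max (\<mu> j) (\<nu> j) + U j i)"
    unfolding x y max_plus_ereal by (simp add: max_SUP_fin)
  moreover have "\<forall>j. max (\<mu> j) (\<nu> j) \<noteq> \<infinity>" using mu nu by (simp add: max_def)
  ultimately show "(\<lambda>i. max (x i) (y i)) \<in> gen U" unfolding gen_def
    by (intro CollectI exI[of _ "\<lambda>j. max (\<mu> j) (\<nu> j)"]) simp
qed

lemma single_SUP:
  fixes U :: "'a \<Rightarrow> 'b \<Rightarrow> ereal"
  assumes U: "\<forall>j i. U j i \<noteq> \<infinity>"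
  shows "(SUP j. (if j = j0 then c else -\<infinity>) + U j i) = c + U j0 i"
proof (rule order.antisym)
  show "(SUP j. (if j = j0 then c else -\<infinity>) + U j i) \<le> c + U j0 i"
  proof (rule SUP_least)
    fix j show "(if j = j0 then c else -\<infinity>) + U j i \<le> c + U j0 i"
      using U by (cases "j = j0"; cases "U j i") auto
  qed
  show "c + U j0 i \<le> (SUP j. (if j = j0 then c else -\<infinity>) + U j i)"
    by (rule SUP_upper2[of j0]) auto
qed

lemma single_in_gen:
  assumes U: "\<forall>j i. U j i \<noteq> \<infinity>" and c: "c \<noteq> \<infinity>"
  shows "(\<lambda>i. c + U j0 i) \<in> gen U"
  unfolding gen_def
  by (intro CollectI exI[of _ "\<lambda>j. if j = j0 then c else -\<infinity>"]) (simp add: single_SUP[OF U] c)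

lemma split_SUP:
  fixes U :: "'a \<Rightarrow> 'b \<Rightarrow> ereal"
  assumes U: "\<forall>j i. U j i \<noteq> \<infinity>"
  shows "(SUP j. \<mu> j + U j i) = max (\<mu> j0 + U j0 i) (SUP j. (\<mu>(j0 := -\<infinity>)) j + U j i)"
proof (rule order.antisym)
  show "(SUP j. \<mu> j + U j i) \<le> max (\<mu> j0 + U j0 i) (SUP j. (\<mu>(j0 := -\<infinity>)) j + U j i)"
  proof (rule SUP_least)
    fix j show "\<mu> j + U j i \<le> max (\<mu> j0 + U j0 i) (SUP j. (\<mu>(j0 := -\<infinity>)) j + U j i)"
    proof (cases "j = j0")
      case True then show ?thesis by simp
    next
      case False
      then have "\<mu> j + U j i \<le> (SUP j. (\<mu>(j0 := -\<infinity>)) j + U j i)"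
        by (intro SUP_upper2[of j]) auto
      then show ?thesis by (simp add: le_max_iff_disj)
    qed
  qed
  have "(SUP j. (\<mu>(j0 := -\<infinity>)) j + U j i) \<le> (SUP j. \<mu> j + U j i)"
  proof (rule SUP_mono)
    fix j show "\<exists>m\<in>UNIV. (\<mu>(j0 := -\<infinity>)) j + U j i \<le> \<mu> m + U m i"
    proof (cases "j = j0")
      case True then show ?thesis using U by (cases "U j i") auto
    next
      case False then show ?thesis by auto
    qed
  qed
  moreover have "\<mu> j0 + U j0 i \<le> (SUP j. \<mu> j + U j i)" by (rule SUP_upper) simp
  ultimately show "max (\<mu> j0 + U j0 i) (SUP j. (\<mu>(j0 := -\<infinity>)) j + U j i) \<le> (SUP j. \<mu> j + U j i)"
    by simp
qed

lemma extreme_term: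
  assumes U: "\<forall>j i. U j i \<noteq> \<infinity>"
    and ex: "extreme_vec (gen U) x" and nz: "x \<noteq> (\<lambda>i. -\<infinity>)"
  shows "\<exists>j m. x = (\<lambda>i. ereal m + U j i)"
proof -
  have main: "\<forall>\<mu>. (\<forall>j. \<mu> j \<noteq> \<infinity>) \<longrightarrow> {j. \<mu> j \<noteq> -\<infinity>} \<subseteq> J \<longrightarrow> x = (\<lambda>i. SUP j. \<mu> j + U j i)
     \<longrightarrow> (\<exists>j. x = (\<lambda>i. \<mu> j + U j i) \<and> \<mu> j \<noteq> -\<infinity>)" if "finite J" for J
    using that
  proof (induction J rule: finite_induct)
    case empty
    show ?case
    proof (intro allI impI)
      fix \<mu> :: "'a \<Rightarrow> ereal" assume "\<forall>j. \<mu> j \<noteq> \<infinity>" "{j. \<mu> j \<noteq> -\<infinity>} \<subseteq> {}" and x: "x = (\<lambda>i. SUP j. \<mu> j + U j i)"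
      then have "\<mu> j = -\<infinity>" for j by auto
      then have "\<mu> j + U j i = -\<infinity>" for j i using U by (cases "U j i") auto
      then have "x = (\<lambda>i. -\<infinity>)" unfolding x by (simp only:) simp
      with nz show "\<exists>j. x = (\<lambda>i. \<mu> j + U j i) \<and> \<mu> j \<noteq> -\<infinity>" by blast
    qed
  next
    case (insert j0 J)
    show ?case
    proof (intro allI impI)
      fix \<mu> :: "'a \<Rightarrow> ereal" assume mu: "\<forall>j. \<mu> j \<noteq> \<infinity>" and supp: "{j. \<mu> j \<noteq> -\<infinity>} \<subseteq> insert j0 J"
        and x: "x = (\<lambda>i. SUP j. \<mu> j + U j i)"
      define \<nu> where "\<nu> = \<mu>(j0 := -\<infinity>)"
      have nu: "\<forall>j. \<nu> j \<noteq> \<infinity>" using mu by (simp add: \<nu>_def)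
      have suppnu: "{j. \<nu> j \<noteq> -\<infinity>} \<subseteq> J" using supp by (auto simp: \<nu>_def)
      have xs: "x = (\<lambda>i. max (\<mu> j0 + U j0 i) (SUP j. \<nu> j + U j i))"
        unfolding x \<nu>_def using split_SUP[OF U] by blast
      have t1: "(\<lambda>i. \<mu> j0 + U j0 i) \<in> gen U" using single_in_gen[OF U] mu by blast
      have t2: "(\<lambda>i. SUP j. \<nu> j + U j i) \<in> gen U" unfolding gen_def using nu by blast
      from ex have "\<forall>v\<in>gen U. \<forall>w\<in>gen U. x = (\<lambda>i. max (v i) (w i)) \<longrightarrow> x = v \<or> x = w"
        unfolding extreme_vec_def by blast
      from this[rule_format, OF t1 t2 xs] have "x = (\<lambda>i. \<mu> j0 + U j0 i) \<or> x = (\<lambda>i. SUP j. \<nu> j + U j i)" .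
      then show "\<exists>j. x = (\<lambda>i. \<mu> j + U j i) \<and> \<mu> j \<noteq> -\<infinity>"
      proof
        assume h: "x = (\<lambda>i. \<mu> j0 + U j0 i)"
        have "\<mu> j0 \<noteq> -\<infinity>"
        proof
          assume "\<mu> j0 = -\<infinity>"
          then have "\<mu> j0 + U j0 i = -\<infinity>" for i using U by (cases "U j0 i") auto
          then have "x = (\<lambda>i. -\<infinity>)" unfolding h by (simp only:)
          with nz show False by blast
        qed
        with h show ?thesis by blast
      next
        assume h: "x = (\<lambda>i. SUP j. \<nu> j + U j i)"
        then obtain j where j: "x = (\<lambda>i. \<nu> j + U j i)" "\<nu> j \<noteq> -\<infinity>"
          using insert.IH nu suppnu by blast
        then have "j \<noteq> j0" by (auto simp: \<nu>_def)
        then show ?thesis using j by (auto simp: \<nu>_def)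
      qed
    qed
  qed
  from ex obtain \<mu> where mu: "\<forall>j. \<mu> j \<noteq> \<infinity>" and x: "x = (\<lambda>i. SUP j. \<mu> j + U j i)"
    unfolding extreme_vec_def gen_def by blast
  from main[of UNIV] mu x obtain j where j: "x = (\<lambda>i. \<mu> j + U j i)" "\<mu> j \<noteq> -\<infinity>" by auto
  then obtain m where "\<mu> j = ereal m" using mu by (cases "\<mu> j") auto
  with j show ?thesis by auto
qed

lemma ray_shift: "ray (\<lambda>i. ereal m + u i) = ray u"
  unfolding ray_def
proof (intro equalityI subsetI)
  fix y assume "y \<in> {\<lambda>i. l + (ereal m + u i) |l. l \<noteq> \<infinity>}"
  then obtain l where l: "l \<noteq> \<infinity>" "y = (\<lambda>i. l + (ereal m + u i))" by blast
  then have "y = (\<lambda>i. (l + ereal m) + u i)" by (simp add: add.assoc)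
  moreover have "l + ereal m \<noteq> \<infinity>" using l by auto
  ultimately show "y \<in> {\<lambda>i. l + u i |l. l \<noteq> \<infinity>}" by blast
next
  fix y assume "y \<in> {\<lambda>i. l + u i |l. l \<noteq> \<infinity>}"
  then obtain l where l: "l \<noteq> \<infinity>" "y = (\<lambda>i. l + u i)" by blast
  have e: "l - ereal m + ereal m = l" using l by (cases l) auto
  have "y = (\<lambda>i. (l - ereal m) + (ereal m + u i))"
    unfolding l(2) by (simp add: add.assoc[symmetric] e)
  moreover have "l - ereal m \<noteq> \<infinity>" using l by (cases l) auto
  ultimately show "y \<in> {\<lambda>i. l + (ereal m + u i) |l. l \<noteq> \<infinity>}" by blast
qed

locale gens =
  fixes U :: "'n::finite \<Rightarrow> 'n \<Rightarrow> ereal" and a :: "'n \<Rightarrow> real" and r :: real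
  assumes U: "\<forall>j i. U j i \<noteq> \<infinity>"
    and diag: "\<And>j. U j j = ereal (a j)"
    and off: "\<And>i j. i \<noteq> j \<Longrightarrow> U j i \<le> ereal (a i - r)"
    and rpos: "r > 0"
begin

lemma U_in_gen: "U j \<in> gen U"
  using single_in_gen[OF U, of 0 j] by simp

lemma below_eq:
  assumes v: "v \<in> gen U" and le: "\<And>i. v i \<le> U j i" and eq: "v j = U j j"
  shows "v = U j"
proof -
  obtain \<mu> where mu: "\<forall>k. \<mu> k \<noteq> \<infinity>" and vd: "v = (\<lambda>i. SUP k. \<mu> k + U k i)"
    using v unfolding gen_def by blast
  obtain l where l: "v j = \<mu> l + U l j" using SUP_att[of "\<lambda>k. \<mu> k + U k j"] vd by auto
  have lj: "l = j"
  proof (rule ccontr)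
    assume "l \<noteq> j"
    have s: "\<mu> l + U l j = ereal (a j)" using l eq diag by simp
    obtain m where m: "\<mu> l = ereal m" using mu s U[rule_format, of l j] by (cases "\<mu> l"; cases "U l j") auto
    obtain x where x: "U l j = ereal x" using U s m by (cases "U l j") auto
    have "x \<le> a j - r" using off[OF \<open>l \<noteq> j\<close>[symmetric]] x by simp
    moreover have "m + x = a j" using s m x by simp
    moreover have "\<mu> l + U l l \<le> v l" unfolding vd by (rule SUP_upper) simp
    then have a1: "ereal (m + a l) \<le> v l" using m diag[of l] by simp
    have a2: "v l \<le> ereal (a l - r)" using le[of l] off[OF \<open>l \<noteq> j\<close>] by (rule order.trans)
    from a1 a2 have "m + a l \<le> a l - r" by (metis order.trans ereal_less_eq(3))
    ultimately show False using rpos by simp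
  qed
  have "\<mu> j + ereal (a j) = ereal (a j)" using l lj eq diag by simp
  then have "\<mu> j = 0" by (cases "\<mu> j") (auto simp: zero_ereal_def)
  then have ge: "U j i \<le> v i" for i
    unfolding vd by (intro SUP_upper2[of j]) auto
  show ?thesis using le ge by (intro ext order.antisym) auto
qed

lemma U_extreme: "extreme_vec (gen U) (U j)"
  unfolding extreme_vec_def
proof (intro conjI ballI impI U_in_gen)
  fix v w assume v: "v \<in> gen U" and w: "w \<in> gen U" and h: "U j = (\<lambda>i. max (v i) (w i))"
  have lev: "v i \<le> U j i" and lew: "w i \<le> U j i" for i using fun_cong[OF h, of i] by simp_all
  have "U j j = max (v j) (w j)" using fun_cong[OF h, of j] by simp
  then have "v j = U j j \<or> w j = U j j" by (simp add: max_def)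
  then show "U j = v \<or> U j = w"
    using below_eq[OF v lev] below_eq[OF w lew] by metis
qed

lemma ray_inj: assumes "j \<noteq> j'" shows "ray (U j) \<noteq> ray (U j')"
proof
  assume e: "ray (U j) = ray (U j')"
  have "U j \<in> ray (U j)" unfolding ray_def by (intro CollectI exI[of _ 0]) simp
  then have "U j \<in> ray (U j')" using e by simp
  then have "\<exists>l. U j = (\<lambda>i. l + U j' i) \<and> l \<noteq> \<infinity>" unfolding ray_def by (simp only: mem_Collect_eq)
  then obtain l where l: "l \<noteq> \<infinity>" "U j = (\<lambda>i. l + U j' i)" by blast
  have s1: "l + U j' j = ereal (a j)" using fun_cong[OF l(2), of j] diag[of j] by simp
  have s2: "l + ereal (a j') \<le> ereal (a j' - r)" using fun_cong[OF l(2), of j'] diag[of j'] off[OF assms[symmetric]] by simp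
  obtain t where t: "l = ereal t" using l(1) s1 U[rule_format, of j' j] by (cases l; cases "U j' j") auto
  obtain x where x: "U j' j = ereal x" using U s1 t by (cases "U j' j") auto
  have "x \<le> a j - r" using off[OF assms] x by simp
  moreover have "t + x = a j" using s1 t x by simp
  moreover have "t + a j' \<le> a j' - r" using s2 t by simp
  ultimately show False using rpos by simp
qed

lemma gen_simplicial: "simplicial (gen U)"
proof -
  have ed: "extreme_directions (gen U) = range (\<lambda>j. ray (U j))"
  proof (intro equalityI subsetI)
    fix D assume "D \<in> extreme_directions (gen U)"
    then obtain u where u: "extreme_vec (gen U) u" "u \<noteq> (\<lambda>i. -\<infinity>)" "D = ray u"
      unfolding extreme_directions_def ray_def[symmetric] by blast
    obtain j m where "u = (\<lambda>i. ereal m + U j i)" using extreme_term[OF U u(1,2)] by blast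
    then have "D = ray (U j)" using u(3) ray_shift by simp
    then show "D \<in> range (\<lambda>j. ray (U j))" by blast
  next
    fix D assume "D \<in> range (\<lambda>j. ray (U j))"
    then obtain j where j: "D = ray (U j)" by blast
    have "U j \<noteq> (\<lambda>i. -\<infinity>)" using diag[of j] by (metis MInfty_neq_ereal(1))
    then show "D \<in> extreme_directions (gen U)"
      unfolding extreme_directions_def j ray_def[symmetric] using U_extreme[of j] by blast
  qed
  have inj: "inj (\<lambda>j. ray (U j))" using ray_inj by (meson injI)
  show ?thesis unfolding simplicial_def ed
    using gen_cone[OF U] card_image[OF inj] by simp
qed

end

lemma shift_cancel: "x \<noteq> \<infinity> \<Longrightarrow> v \<noteq> \<infinity> \<Longrightarrow> (x - ereal g) + (v + ereal g) = v + (x::ereal)"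
  by (cases x; cases v) auto

lemma ball_char:
  assumes "y \<in> hilbert_ball (\<lambda>i. ereal (a i)) r"
  shows "\<exists>b. y = (\<lambda>i. ereal (b i)) \<and> (\<forall>i j. (a i - b i) - (a j - b j) \<le> r)"
proof -
  have ninf: "y i \<noteq> \<infinity>" for i using assms by (auto simp: hilbert_ball_def rmax_vecs_def rmax_vec_def)
  have d: "hilbert_dist (\<lambda>i. ereal (a i)) y \<le> ereal r" using assms by (simp add: hilbert_ball_def)
  have nminf: "y i \<noteq> -\<infinity>" for i
  proof
    assume yi: "y i = -\<infinity>"
    have E: "{ereal (l - m) | l m :: real. \<forall>i. ereal m + y i \<le> ereal (a i) \<and> ereal (a i) \<le> ereal l + y i} = {}"
    proof -
      have "\<not> (ereal (a i) \<le> ereal l + y i)" for l using yi by simp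
      then show ?thesis by blast
    qed
    show False using d[unfolded hilbert_dist_def E] by (simp add: top_ereal_def)
  qed
  define b where "b i = real_of_ereal (y i)" for i
  have "ereal (b i) = y i" for i unfolding b_def using ninf[of i] nminf[of i] by (cases "y i") auto
  then have yb: "y = (\<lambda>i. ereal (b i))" by auto
  have "(a i - b i) - (a j - b j) \<le> r" for i j
  proof -
    have "ereal ((a i - b i) - (a j - b j)) \<le> hilbert_dist (\<lambda>i. ereal (a i)) y"
      unfolding hilbert_dist_def yb
    proof (rule Inf_greatest)
      fix z assume "z \<in> {ereal (l - m) | l m :: real. \<forall>i. ereal m + ereal (b i) \<le> ereal (a i) \<and> ereal (a i) \<le> ereal l + ereal (b i)}"
      then obtain l m where z: "z = ereal (l - m)" and h: "\<forall>i. m + b i \<le> a i \<and> a i \<le> l + b i" by auto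
      from h have "a i \<le> l + b i" "m + b j \<le> a j" by auto
      then show "ereal ((a i - b i) - (a j - b j)) \<le> z" unfolding z by simp
    qed
    from order.trans[OF this d] show ?thesis by simp
  qed
  with yb show ?thesis by blast
qed

theorem proposition3p8:
  fixes V :: "'n::finite \<Rightarrow> 'p::finite \<Rightarrow> ereal"
    and a :: "'n \<Rightarrow> real" and r :: real
  assumes "\<forall>i k. V i k \<noteq> \<infinity>"
    and "\<forall>i. \<exists>k. V i k \<noteq> -\<infinity>"
    and "\<forall>k. \<exists>i. V i k \<noteq> -\<infinity>"
    and "r > 0"
    and "hilbert_ball (\<lambda>i. ereal (a i)) r \<subseteq> Col V"
  shows "\<exists>S. card S = card (UNIV :: 'n set) \<and> simplicial (col_sub V S) \<and>
             hilbert_ball (\<lambda>i. ereal (a i)) r \<subseteq> col_sub V S"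
proof -
  note Vfin = assms(1) and rpos = assms(4) and ball = assms(5)
  have ex: "\<exists>p. V j (fst p) + ereal (snd p) = ereal (a j) \<and> (\<forall>i. i \<noteq> j \<longrightarrow> V i (fst p) + ereal (snd p) \<le> ereal (a i - r))" for j
  proof -
    define g where "g = (\<lambda>i. ereal (if i = j then a i else a i - r))"
    have mem: "ereal (r - 0) \<in> {ereal (l - m) | l m :: real. \<forall>i. ereal m + g i \<le> ereal (a i) \<and> ereal (a i) \<le> ereal l + g i}"
      apply (rule CollectI)
      apply (rule exI[of _ r], rule exI[of _ 0])
      using rpos by (auto simp: g_def)
    have "hilbert_dist (\<lambda>i. ereal (a i)) g \<le> ereal r"
      unfolding hilbert_dist_def using Inf_lower[OF mem] by simp
    then have "g \<in> hilbert_ball (\<lambda>i. ereal (a i)) r"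
      by (simp add: hilbert_ball_def rmax_vecs_def rmax_vec_def g_def)
    with ball have "g \<in> Col V" by blast
    then obtain c where c: "rmax_vec c" and gc: "g = (\<lambda>i. SUP k. V i k + c k)"
      unfolding Col_def col_sub_def by blast
    obtain k where k: "(SUP k. V j k + c k) = V j k + c k" using SUP_att by blast
    have gk: "V i k + c k \<le> g i" for i unfolding gc by (rule SUP_upper) simp
    have eqj: "V j k + c k = ereal (a j)" using k fun_cong[OF gc, of j] by (simp add: g_def)
    obtain \<gamma> where \<gamma>: "c k = ereal \<gamma>"
      using c eqj Vfin by (cases "c k"; cases "V j k") (auto simp: rmax_vec_def)
    show ?thesis
      apply (rule exI[of _ "(k, \<gamma>)"])
      using eqj \<gamma> proof (auto)
      fix i :: 'n assume "i \<noteq> j"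
      then show "V i k + ereal \<gamma> \<le> ereal (a i - r)" using gk[of i] \<gamma> by (simp add: g_def)
    qed
  qed
  obtain f where f: "\<forall>j. V j (fst (f j)) + ereal (snd (f j)) = ereal (a j) \<and> (\<forall>i. i \<noteq> j \<longrightarrow> V i (fst (f j)) + ereal (snd (f j)) \<le> ereal (a i - r))"
    using choice[of "\<lambda>j p. V j (fst p) + ereal (snd p) = ereal (a j) \<and> (\<forall>i. i \<noteq> j \<longrightarrow> V i (fst p) + ereal (snd p) \<le> ereal (a i - r))"] ex by blast
  define kk where "kk j = fst (f j)" for j
  define \<gamma> where "\<gamma> j = snd (f j)" for j
  have kg: "\<And>j. V j (kk j) + ereal (\<gamma> j) = ereal (a j)"
    and kl: "\<And>j i. i \<noteq> j \<Longrightarrow> V i (kk j) + ereal (\<gamma> j) \<le> ereal (a i - r)"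
    using f by (auto simp: kk_def \<gamma>_def)
  define U where "U j i = V i (kk j) + ereal (\<gamma> j)" for j i
  have Ufin: "\<forall>j i. U j i \<noteq> \<infinity>" using Vfin by (simp add: U_def)
  interpret gens U a r
    by unfold_locales (use Ufin kg kl rpos in \<open>auto simp: U_def\<close>)
  have inj: "inj kk"
  proof (rule injI, rule ccontr)
    fix j j' assume e: "kk j = kk j'" and ne: "j \<noteq> j'"
    have e1: "V j' (kk j) + ereal (\<gamma> j) \<le> ereal (a j' - r)" using kl ne by simp
    have e2: "V j' (kk j) + ereal (\<gamma> j') = ereal (a j')" using kg[of j'] e by simp
    have e3: "V j (kk j) + ereal (\<gamma> j) = ereal (a j)" using kg[of j] by simp
    have e4: "V j (kk j) + ereal (\<gamma> j') \<le> ereal (a j - r)" using kl[of j j'] ne e by simp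
    obtain p where p: "V j' (kk j) = ereal p" using e2 Vfin by (cases "V j' (kk j)") auto
    obtain q where q: "V j (kk j) = ereal q" using e3 Vfin by (cases "V j (kk j)") auto
    show False using e1 e2 e3 e4 p q rpos by simp
  qed
  have colgen: "col_sub V (range kk) = gen U"
  proof (intro equalityI subsetI)
    fix y assume "y \<in> col_sub V (range kk)"
    then obtain c where c: "rmax_vec c" and y: "y = (\<lambda>i. SUP k\<in>range kk. V i k + c k)"
      unfolding col_sub_def by blast
    have "y = (\<lambda>i. SUP j. (c (kk j) - ereal (\<gamma> j)) + U j i)"
      unfolding y U_def using c Vfin
      by (simp add: image_image shift_cancel rmax_vec_def)
    moreover have "\<forall>j. c (kk j) - ereal (\<gamma> j) \<noteq> \<infinity>"
    proof
      fix j show "c (kk j) - ereal (\<gamma> j) \<noteq> \<infinity>" using c by (cases "c (kk j)") (auto simp: rmax_vec_def)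
    qed
    ultimately show "y \<in> gen U" unfolding gen_def
      by (intro CollectI exI[of _ "\<lambda>j. c (kk j) - ereal (\<gamma> j)"]) simp
  next
    fix y assume "y \<in> gen U"
    then obtain \<mu> where mu: "\<forall>j. \<mu> j \<noteq> \<infinity>" and y: "y = (\<lambda>i. SUP j. \<mu> j + U j i)"
      unfolding gen_def by blast
    define c where "c k = \<mu> (inv kk k) + ereal (\<gamma> (inv kk k))" for k
    have ck: "c (kk j) = \<mu> j + ereal (\<gamma> j)" for j unfolding c_def using inj by simp
    have "y = (\<lambda>i. SUP k\<in>range kk. V i k + c k)"
      unfolding y U_def by (simp add: image_image ck ac_simps)
    moreover have "rmax_vec c" using mu by (simp add: rmax_vec_def c_def)
    ultimately show "y \<in> col_sub V (range kk)" unfolding col_sub_def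
      by (intro CollectI exI[of _ c]) simp
  qed
  have sub: "hilbert_ball (\<lambda>i. ereal (a i)) r \<subseteq> gen U"
  proof
    fix y assume "y \<in> hilbert_ball (\<lambda>i. ereal (a i)) r"
    then obtain b where yb: "y = (\<lambda>i. ereal (b i))" and bd: "\<forall>i j. (a i - b i) - (a j - b j) \<le> r"
      using ball_char by blast
    have "(SUP j. ereal (b j - a j) + U j i) = ereal (b i)" for i
    proof (rule order.antisym)
      show "(SUP j. ereal (b j - a j) + U j i) \<le> ereal (b i)"
      proof (rule SUP_least)
        fix j show "ereal (b j - a j) + U j i \<le> ereal (b i)"
        proof (cases "i = j")
          case True then show ?thesis using diag[of i] by simp
        next
          case False
          have "ereal (b j - a j) + U j i \<le> ereal (b j - a j) + ereal (a i - r)"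
            using off[OF False] by (rule add_left_mono)
          also have "\<dots> \<le> ereal (b i)" using bd[rule_format, of i j] by simp
          finally show ?thesis .
        qed
      qed
      show "ereal (b i) \<le> (SUP j. ereal (b j - a j) + U j i)"
        by (rule SUP_upper2[of i]) (simp_all add: diag)
    qed
    then have "y = (\<lambda>i. SUP j. ereal (b j - a j) + U j i)" unfolding yb by simp
    then show "y \<in> gen U" unfolding gen_def by (intro CollectI exI[of _ "\<lambda>j. ereal (b j - a j)"]) simp
  qed
  show ?thesis
    apply (rule exI[of _ "range kk"])
    using card_image[OF inj] gen_simplicial sub colgen by simp
qed

end
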